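(* Let $p$ be an odd prime, let $n$ be the multiplicative order of $2$ modulo $p$, and let $e$ be the multiplicative order of $p$ modulo $3n$. Suppose that $e>1$. Set $q=p^a$ where $a\not\equiv 0\pmod e$, and suppose further that $q\equiv 1\pmod 6$. Then for any primitive element $\rho$ of $\mathbb F_q$, the cyclotomic number $c^3_q(1,2)$ is odd.
   Context: Write $q=6r+1$; for $i\in\mathbb Z_3$, $C^3_q(i)=\{\rho^{3j+i}: 0\le j\le 2r-1\}$, and $c^3_q(a,b)=|(C^3_q(a)+1)\cap C^3_q(b)|$ for $a,b\in\mathbb Z_3$. *)

theory Defs
  imports "HOL-Number_Theory.Number_Theory" "HOL-Library.Cardinality"
begin

definition primitive_element :: "'a::{finite,field} \<Rightarrow> bool" where
  "primitive_element \<rho> \<longleftrightarrow> \<rho> \<noteq> 0 \<and> (\<forall>x. x \<noteq> 0 \<longrightarrow> (\<exists>k::nat. x = \<rho> ^ k))"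

definition cyc_class3 :: "'a::{finite,field} \<Rightarrow> nat \<Rightarrow> 'a set" where
  "cyc_class3 \<rho> i = {\<rho> ^ (3 * j + i) | j. j < 2 * ((CARD('a) - 1) div 6)}"

definition cyc_num3 :: "'a::{finite,field} \<Rightarrow> nat \<Rightarrow> nat \<Rightarrow> nat" where
  "cyc_num3 \<rho> a b = card ((\<lambda>x. x + 1) ` cyc_class3 \<rho> a \<inter> cyc_class3 \<rho> b)"

end

theory Submission
  imports Defs
begin

lemma field_pow_card_minus1:
  fixes x :: "'a::{finite,field}"
  assumes "x \<noteq> 0"
  shows "x ^ (CARD('a) - 1) = 1"
proof -
  have "(\<Prod>y\<in>UNIV-{0}. x * y) = x ^ card (UNIV - {0::'a}) * \<Prod>(UNIV-{0::'a})"
    by (simp add: prod.distrib)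
  also have "card (UNIV - {0::'a}) = CARD('a) - 1" by (simp add: card_Diff_singleton)
  also have "(\<Prod>y\<in>UNIV-{0}. x * y) = (\<Prod>y\<in>UNIV-{0::'a}. y)"
    by (rule prod.reindex_bij_witness[of _ "\<lambda>y. y / x" "\<lambda>y. x * y"]) (use assms in auto)
  finally have "(\<Prod>y\<in>UNIV-{0::'a}. y) * 1 = (\<Prod>y\<in>UNIV-{0::'a}. y) * x ^ (CARD('a) - 1)"
    by (simp add: mult_ac)
  moreover have "(\<Prod>y\<in>UNIV-{0::'a}. y) \<noteq> 0" by (simp add: prod_zero_iff)
  ultimately show ?thesis by (metis mult_left_cancel)
qed

lemma card_ge2: "CARD('a::{finite,field}) \<ge> 2"
proof -
  have "card {0::'a,1} \<le> CARD('a)" by (rule card_mono) auto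
  then show ?thesis by simp
qed


lemma invol_even:
  assumes "finite A" "\<forall>x\<in>A. g x \<in> A \<and> g (g x) = x \<and> g x \<noteq> x"
  shows "even (card A)"
  using assms
proof (induction "card A" arbitrary: A rule: less_induct)
  case less
  show ?case
  proof (cases "A = {}")
    case True then show ?thesis by simp
  next
    case False
    then obtain x where x: "x \<in> A" by blast
    define A' where "A' = A - {x, g x}"
    have gx: "g x \<in> A" "g x \<noteq> x" using less.prems x by auto
    have cA: "card A = card A' + 2"
    proof -
      have "card A' = card A - card {x, g x}" unfolding A'_def using less.prems(1) x gx
        by (subst card_Diff_subset) auto
      moreover have "card {x, g x} = 2" using gx by simp
      moreover have "card A \<ge> 2" using \<open>card {x, g x} = 2\<close> less.prems(1) x gx
        by (metis card_mono empty_subsetI insert_subset)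
      ultimately show ?thesis by simp
    qed
    have "finite A'" using less.prems(1) unfolding A'_def by simp
    moreover have "\<forall>y\<in>A'. g y \<in> A' \<and> g (g y) = y \<and> g y \<noteq> y"
    proof
      fix y assume y: "y \<in> A'"
      then have yA: "y \<in> A" "y \<noteq> x" "y \<noteq> g x" unfolding A'_def by auto
      have h: "g y \<in> A" "g (g y) = y" "g y \<noteq> y" using less.prems(2) yA(1) by auto
      have "g y \<noteq> x" using h yA by metis
      moreover have "g y \<noteq> g x" using h yA less.prems(2) x by metis
      ultimately show "g y \<in> A' \<and> g (g y) = y \<and> g y \<noteq> y" using h unfolding A'_def by auto
    qed
    moreover have "card A' < card A" using cA by simp
    ultimately have "even (card A')" using less.hyps by blast
    then show ?thesis using cA by simp
  qed
qed

locale cyc3 =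
  fixes \<rho> :: "'a::{finite,field}"
  assumes prim: "primitive_element \<rho>" and six: "6 dvd CARD('a) - 1"
begin

abbreviation C where "C i \<equiv> cyc_class3 \<rho> i"

lemma rho_nz: "\<rho> \<noteq> 0" using prim by (simp add: primitive_element_def)

lemma N_pos: "(CARD('a) - 1) > 0" using card_ge2[where 'a='a] by linarith

lemma rho_N: "\<rho> ^ (CARD('a) - 1) = 1" using field_pow_card_minus1 rho_nz by blast

lemma rho_mod: "\<rho> ^ k = \<rho> ^ (k mod (CARD('a) - 1))"
proof -
  have "\<rho> ^ k = \<rho> ^ ((CARD('a) - 1) * (k div (CARD('a) - 1)) + k mod (CARD('a) - 1))" by simp
  also have "\<dots> = (\<rho> ^ (CARD('a) - 1)) ^ (k div (CARD('a) - 1)) * \<rho> ^ (k mod (CARD('a) - 1))" by (simp only: power_add power_mult)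
  finally show ?thesis using rho_N by simp
qed

lemma img: "(\<lambda>k. \<rho> ^ k) ` {..<(CARD('a) - 1)} = UNIV - {0}"
proof
  show "(\<lambda>k. \<rho> ^ k) ` {..<(CARD('a) - 1)} \<subseteq> UNIV - {0}" using rho_nz by auto
  show "UNIV - {0} \<subseteq> (\<lambda>k. \<rho> ^ k) ` {..<(CARD('a) - 1)}"
  proof
    fix x assume "x \<in> (UNIV - {0::'a})"
    then obtain k where "x = \<rho> ^ k" using prim unfolding primitive_element_def by auto
    then have "x = \<rho> ^ (k mod (CARD('a) - 1))" using rho_mod by simp
    moreover have "k mod (CARD('a) - 1) < (CARD('a) - 1)" using N_pos by simp
    ultimately show "x \<in> (\<lambda>k. \<rho> ^ k) ` {..<(CARD('a) - 1)}" by blast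
  qed
qed

lemma inj: "inj_on (\<lambda>k. \<rho> ^ k) {..<(CARD('a) - 1)}"
proof (rule eq_card_imp_inj_on)
  show "finite {..<(CARD('a) - 1)}" by simp
  show "card ((\<lambda>k. \<rho> ^ k) ` {..<(CARD('a) - 1)}) = card {..<(CARD('a) - 1)}" unfolding img by (simp add: card_Diff_singleton)
qed

lemma pow_eq: "\<rho> ^ k = \<rho> ^ l \<Longrightarrow> k mod (CARD('a) - 1) = l mod (CARD('a) - 1)"
proof -
  assume "\<rho> ^ k = \<rho> ^ l"
  then have "\<rho> ^ (k mod (CARD('a) - 1)) = \<rho> ^ (l mod (CARD('a) - 1))" using rho_mod by metis
  moreover have "k mod (CARD('a) - 1) \<in> {..<(CARD('a) - 1)}" "l mod (CARD('a) - 1) \<in> {..<(CARD('a) - 1)}" using N_pos by auto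
  ultimately show ?thesis using inj by (meson inj_onD)
qed

lemma three_N: "3 dvd (CARD('a) - 1)" 
proof -
  have "(3::nat) dvd 6" by simp
  then show ?thesis using six by (rule dvd_trans)
qed

lemma pow_eq3: "\<rho> ^ k = \<rho> ^ l \<Longrightarrow> k mod 3 = l mod 3"
proof -
  assume "\<rho> ^ k = \<rho> ^ l"
  then have "(k mod (CARD('a) - 1)) mod 3 = (l mod (CARD('a) - 1)) mod 3" using pow_eq[OF \<open>\<rho> ^ k = \<rho> ^ l\<close>] by simp
  then show ?thesis using three_N by (simp add: mod_mod_cancel)
qed

lemma m_eq: "2 * ((CARD('a) - 1) div 6) = (CARD('a) - 1) div 3" using six by (elim dvdE) simp

lemma memC: "i < 3 \<Longrightarrow> x \<in> C i \<longleftrightarrow> (\<exists>k. x = \<rho> ^ k \<and> k mod 3 = i)"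
proof
  assume "i < 3" "x \<in> C i"
  then show "\<exists>k. x = \<rho> ^ k \<and> k mod 3 = i" unfolding cyc_class3_def by auto
next
  assume i: "i < 3" and "\<exists>k. x = \<rho> ^ k \<and> k mod 3 = i"
  then obtain k where k: "x = \<rho> ^ k" "k mod 3 = i" by auto
  define j where "j = (k mod (CARD('a) - 1)) div 3"
  have e: "k mod (CARD('a) - 1) = 3 * j + i" 
  proof -
    have "(k mod (CARD('a) - 1)) mod 3 = i" using k three_N by (simp add: mod_mod_cancel)
    then show ?thesis unfolding j_def by (metis div_mult_mod_eq mult.commute)
  qed
  have "k mod (CARD('a) - 1) < (CARD('a) - 1)" using N_pos by simp
  then have "j < (CARD('a) - 1) div 3" using e three_N by auto
  moreover have "x = \<rho> ^ (3 * j + i)" using k e rho_mod by metis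
  ultimately show "x \<in> C i" unfolding cyc_class3_def using m_eq by auto
qed


lemma nzC: "x \<in> C i \<Longrightarrow> x \<noteq> 0"
  using rho_nz unfolding cyc_class3_def by auto

lemma cover: "x \<noteq> 0 \<Longrightarrow> \<exists>i<3. x \<in> C i"
proof -
  assume "x \<noteq> 0"
  then obtain k where "x = \<rho> ^ k" using prim unfolding primitive_element_def by auto
  then have "x \<in> C (k mod 3)" using memC[of "k mod 3" x] by auto
  then show ?thesis by (intro exI[of _ "k mod 3"]) auto
qed

lemma uniq: "i < 3 \<Longrightarrow> j < 3 \<Longrightarrow> x \<in> C i \<Longrightarrow> x \<in> C j \<Longrightarrow> i = j"
  using memC pow_eq3 by metis

lemma multC: "i < 3 \<Longrightarrow> j < 3 \<Longrightarrow> x \<in> C i \<Longrightarrow> y \<in> C j \<Longrightarrow> x * y \<in> C ((i + j) mod 3)"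
proof -
  assume a: "i < 3" "j < 3" "x \<in> C i" "y \<in> C j"
  then obtain k l where "x = \<rho> ^ k" "k mod 3 = i" "y = \<rho> ^ l" "l mod 3 = j" using memC by metis
  then have "x * y = \<rho> ^ (k + l)" "(k + l) mod 3 = (i + j) mod 3" by (auto simp: power_add mod_add_eq)
  then show ?thesis using memC[of "(i + j) mod 3"] by auto
qed

lemma invC: "i < 3 \<Longrightarrow> x \<in> C i \<Longrightarrow> inverse x \<in> C ((3 - i) mod 3)"
proof -
  assume a: "i < 3" "x \<in> C i"
  then obtain k where k: "x = \<rho> ^ k" "k mod 3 = i" using memC by metis
  have "x \<noteq> 0" using a nzC by blast
  then have "inverse x \<noteq> 0" by simp
  then obtain l where l: "inverse x = \<rho> ^ l" using prim unfolding primitive_element_def by blast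
  have "\<rho> ^ (k + l) = \<rho> ^ k * \<rho> ^ l" by (rule power_add)
  also have "\<dots> = x * inverse x" by (simp only: k(1)[symmetric] l[symmetric])
  finally have "\<rho> ^ (k + l) = x * inverse x" .
  then have "\<rho> ^ (k + l) = \<rho> ^ 0" using \<open>x \<noteq> 0\<close> by simp
  then have "(k + l) mod 3 = 0 mod 3" by (rule pow_eq3)
  then have "(k + l) mod 3 = 0" by simp
  then have "(k mod 3 + l mod 3) mod 3 = 0" by (simp add: mod_add_eq)
  then have h: "(i + l mod 3) mod 3 = 0" using k(2) by simp
  have "i \<in> {0,1,2}" using a(1) by auto
  moreover have "l mod 3 \<in> {0,1,2}" by auto
  ultimately have "l mod 3 = (3 - i) mod 3" using h by (auto; presburger)
  then have "\<exists>k. inverse x = \<rho> ^ k \<and> k mod 3 = (3 - i) mod 3" using l by blast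
  moreover have "(3 - i) mod 3 < 3" by simp
  ultimately show ?thesis using memC by blast
qed

lemma m1C: "-1 \<in> C 0"
proof -
  have "(-1::'a) \<noteq> 0" by simp
  then obtain k where k: "-1 = \<rho> ^ k" using prim unfolding primitive_element_def by blast
  have "\<rho> ^ (2 * k) = (\<rho> ^ k)^2" by (simp add: power_mult[symmetric] mult.commute[of 2 k])
  also have "\<dots> = \<rho> ^ 0" using k[symmetric] by simp
  finally have "\<rho> ^ (2 * k) = \<rho> ^ 0" .
  then have "(2 * k) mod (CARD('a) - 1) = 0 mod (CARD('a) - 1)" by (rule pow_eq)
  then have "(2 * k) mod (CARD('a) - 1) = 0" by simp
  then have "6 dvd 2 * k" using six by (metis dvd_trans mod_0_imp_dvd)
  then have "k mod 3 = 0" by presburger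
  then show ?thesis using memC[of 0] k by auto
qed

lemma negC: "i < 3 \<Longrightarrow> x \<in> C i \<Longrightarrow> - x \<in> C i"
  using multC[OF _ _ m1C, of i x] by simp

lemma negC_iff: "i < 3 \<Longrightarrow> - x \<in> C i \<longleftrightarrow> x \<in> C i"
  using negC[of i x] negC[of i "-x"] by auto

lemma card_C: "i < 3 \<Longrightarrow> card (C i) = (CARD('a) - 1) div 3"
proof -
  assume i: "i < 3"
  have "C i = (\<lambda>j. \<rho> ^ (3 * j + i)) ` {..<(CARD('a) - 1) div 3}"
    unfolding cyc_class3_def using m_eq by auto
  moreover have "inj_on (\<lambda>j. \<rho> ^ (3 * j + i)) {..<(CARD('a) - 1) div 3}"
  proof (rule inj_onI)
    fix u v assume uv: "u \<in> {..<(CARD('a) - 1) div 3}" "v \<in> {..<(CARD('a) - 1) div 3}" "\<rho> ^ (3 * u + i) = \<rho> ^ (3 * v + i)"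
    have "3 * u + i < CARD('a) - 1" "3 * v + i < CARD('a) - 1" using uv(1,2) three_N i by (auto elim!: dvdE)
    moreover have "(3 * u + i) mod (CARD('a) - 1) = (3 * v + i) mod (CARD('a) - 1)" using uv(3) by (rule pow_eq)
    ultimately show "u = v" by simp
  qed
  ultimately show ?thesis by (simp add: card_image)
qed

definition S where "S i j = {x. x \<in> C i \<and> x + 1 \<in> C j}"

lemma finS: "finite (S i j)" by simp

lemma cyc_num_S: "cyc_num3 \<rho> i j = card (S i j)"
proof -
  have "(\<lambda>x. x + 1) ` C i \<inter> C j = (\<lambda>x. x + 1) ` S i j" unfolding S_def by auto
  moreover have "inj_on (\<lambda>x::'a. x + 1) (S i j)" by (rule inj_onI) simp
  ultimately show ?thesis unfolding cyc_num3_def by (simp add: card_image)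
qed

lemma swap_mem: "i < 3 \<Longrightarrow> j < 3 \<Longrightarrow> x \<in> S i j \<Longrightarrow> -1 - x \<in> S j i"
proof -
  assume a: "i < 3" "j < 3" "x \<in> S i j"
  have e1: "-1 - x = - (x + 1)" by simp
  have e2: "-1 - x + 1 = - x" by simp
  have m1: "- (x + 1) \<in> C j" using a negC[of j "x + 1"] unfolding S_def by auto
  have m2: "- x \<in> C i" using a negC[of i x] unfolding S_def by auto
  have "-1 - x \<in> C j" unfolding e1 by (rule m1)
  moreover have "-1 - x + 1 \<in> C i" unfolding e2 by (rule m2)
  ultimately show ?thesis unfolding S_def by blast
qed

lemma card_swap: "i < 3 \<Longrightarrow> j < 3 \<Longrightarrow> card (S i j) = card (S j i)"
proof -
  assume a: "i < 3" "j < 3"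
  have "(\<lambda>x. -1 - x) ` S i j = S j i"
  proof
    show "(\<lambda>x. -1 - x) ` S i j \<subseteq> S j i" using swap_mem a by auto
    show "S j i \<subseteq> (\<lambda>x. -1 - x) ` S i j"
    proof
      fix y assume "y \<in> S j i"
      then have "-1 - y \<in> S i j" using swap_mem a by auto
      moreover have "y = -1 - (-1 - y)" by simp
      ultimately show "y \<in> (\<lambda>x. -1 - x) ` S i j" by blast
    qed
  qed
  moreover have "inj_on (\<lambda>x::'a. -1 - x) (S i j)" by (rule inj_onI) simp
  ultimately show ?thesis by (metis card_image)
qed

lemma inv_mem1: "x \<in> S 1 1 \<Longrightarrow> inverse x \<in> S 2 0"
proof -
  assume "x \<in> S 1 1"
  then have x: "x \<in> C 1" "x + 1 \<in> C 1" unfolding S_def by auto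
  have ix: "inverse x \<in> C 2" using invC[of 1 x] x by simp
  have "x \<noteq> 0" using x nzC by blast
  then have "inverse x + 1 = (x + 1) * inverse x" by (simp add: field_simps)
  moreover have "(x + 1) * inverse x \<in> C 0" using multC[of 1 2 "x+1" "inverse x"] x ix by simp
  ultimately show ?thesis using ix unfolding S_def by simp
qed

lemma inv_mem2: "x \<in> S 2 0 \<Longrightarrow> inverse x \<in> S 1 1"
proof -
  assume "x \<in> S 2 0"
  then have x: "x \<in> C 2" "x + 1 \<in> C 0" unfolding S_def by auto
  have ix: "inverse x \<in> C 1" using invC[of 2 x] x by simp
  have "x \<noteq> 0" using x nzC by blast
  then have "inverse x + 1 = (x + 1) * inverse x" by (simp add: field_simps)
  moreover have "(x + 1) * inverse x \<in> C 1" using multC[of 0 1 "x+1" "inverse x"] x ix by simp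
  ultimately show ?thesis using ix unfolding S_def by simp
qed

lemma card_inv: "card (S 1 1) = card (S 2 0)"
proof -
  have "inverse ` S 1 1 = S 2 0"
  proof
    show "inverse ` S 1 1 \<subseteq> S 2 0" using inv_mem1 by auto
    show "S 2 0 \<subseteq> inverse ` S 1 1"
    proof
      fix y assume "y \<in> S 2 0"
      then have "inverse y \<in> S 1 1" using inv_mem2 by auto
      moreover have "y = inverse (inverse y)" by simp
      ultimately show "y \<in> inverse ` S 1 1" by blast
    qed
  qed
  moreover have "inj_on (inverse::'a \<Rightarrow> 'a) (S 1 1)" by (rule inj_onI) (metis inverse_inverse_eq)
  ultimately show ?thesis by (metis card_image)
qed

lemma row: "i < 3 \<Longrightarrow> card (S i 0) + card (S i 1) + card (S i 2) = card (C i - {-1})"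
proof -
  assume i: "i < 3"
  have u: "C i - {-1} = S i 0 \<union> S i 1 \<union> S i 2"
  proof
    show "S i 0 \<union> S i 1 \<union> S i 2 \<subseteq> C i - {-1}"
    proof
      fix x assume "x \<in> S i 0 \<union> S i 1 \<union> S i 2"
      then obtain k where k: "x \<in> C i" "x + 1 \<in> C k" unfolding S_def by blast
      then have "x + 1 \<noteq> 0" using nzC by blast
      then have "x \<noteq> -1" by (simp add: eq_neg_iff_add_eq_0)
      then show "x \<in> C i - {-1}" using k by blast
    qed
    show "C i - {-1} \<subseteq> S i 0 \<union> S i 1 \<union> S i 2"
    proof
      fix x assume x: "x \<in> C i - {-1}"
      then have "x \<noteq> -1" by blast
      then have "x + 1 \<noteq> 0" by (simp add: eq_neg_iff_add_eq_0)
      then obtain j where j: "j < 3" "x + 1 \<in> C j" using cover by blast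
      have "j = 0 \<or> j = 1 \<or> j = 2" using j(1) by linarith
      then show "x \<in> S i 0 \<union> S i 1 \<union> S i 2" using x j(2) unfolding S_def by blast
    qed
  qed
  have d: "S i a \<inter> S i b = {}" if "a < 3" "b < 3" "a \<noteq> b" for a b
    using uniq that unfolding S_def by blast
  have "card (S i 0 \<union> S i 1 \<union> S i 2) = card (S i 0 \<union> S i 1) + card (S i 2)"
    by (rule card_Un_disjoint) (use d[of 0 2] d[of 1 2] in auto)
  also have "card (S i 0 \<union> S i 1) = card (S i 0) + card (S i 1)"
    by (rule card_Un_disjoint) (use d[of 0 1] in auto)
  finally show ?thesis using u by simp
qed

lemma S00_even:
  assumes n2: "2 \<notin> C 0"
  shows "even (card (S 0 0))"
proof (rule invol_even[where g = "\<lambda>x. -1 - x"])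
  show "finite (S 0 0)" by simp
  show "\<forall>x\<in>S 0 0. -1 - x \<in> S 0 0 \<and> -1 - (-1 - x) = x \<and> -1 - x \<noteq> x"
  proof
    fix x assume x: "x \<in> S 0 0"
    have "-1 - x \<noteq> x"
    proof
      assume e: "-1 - x = x"
      have x0: "x \<in> C 0" using x unfolding S_def by auto
      then have "x \<noteq> 0" using nzC by blast
      have "(-1::'a) = (-1 - x) + x" by (rule diff_add_cancel[symmetric])
      also have "\<dots> = x + x" by (subst e) (rule refl)
      also have "\<dots> = 2 * x" by (rule mult_2[symmetric])
      finally have h2: "-1 = 2 * x" .
      have "(2::'a) = 2 * x * inverse x" using \<open>x \<noteq> 0\<close> by simp
      also have "\<dots> = - inverse x" unfolding h2[symmetric] by simp
      finally have h3: "2 = - inverse x" .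
      have "inverse x \<in> C 0" using invC[of 0 x] x0 by simp
      then have "- inverse x \<in> C 0" using negC[of 0 "inverse x"] by simp
      then show False using n2 h3 by simp
    qed
    moreover have "-1 - x \<in> S 0 0" using swap_mem[of 0 0 x] x by simp
    moreover have "-1 - (-1 - x) = x" by simp
    ultimately show "-1 - x \<in> S 0 0 \<and> -1 - (-1 - x) = x \<and> -1 - x \<noteq> x" by blast
  qed
qed

end


theorem corollary3p8:
  fixes p a :: nat and \<rho> :: "'a::{finite,field}"
  assumes "prime p" and "odd p"
    and "ord (3 * ord p 2) p > 1"
    and "\<not> ord (3 * ord p 2) p dvd a"
    and "CARD('a) = p ^ a"
    and "[p ^ a = 1] (mod 6)"
    and "primitive_element \<rho>"
  shows "odd (cyc_num3 \<rho> 1 2)"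
proof -
  have "p > 0" using assms(1) prime_gt_0_nat by blast
  then have pa1: "p ^ a \<ge> 1" by simp
  have six: "6 dvd CARD('a) - 1" using assms(5,6) pa1 cong_altdef_nat by simp
  interpret cyc3 \<rho> using assms(7) six by unfold_locales
  define m where "m = (CARD('a) - 1) div 3"
  have cm: "card (C 0) = m" "card (C 1) = m" using card_C m_def by auto
  have "-1 \<in> C 0" by (rule m1C)
  have r0: "card (S 0 0) + card (S 0 1) + card (S 0 2) = m - 1"
    using row[of 0] m1C cm by (simp add: card_Diff_singleton)
  have "-1 \<notin> C 1" using m1C uniq[of 0 1 "-1"] by auto
  then have "C 1 - {-1} = C 1" by simp
  then have r1: "card (S 1 0) + card (S 1 1) + card (S 1 2) = m"
    using row[of 1] cm by simp
  have "card (S 1 0) = card (S 0 1)" using card_swap[of 1 0] by simp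
  moreover have "card (S 1 1) = card (S 0 2)" using card_inv card_swap[of 2 0] by simp
  moreover have "card (C 0) > 0" using \<open>-1 \<in> C 0\<close> card_gt_0_iff by fastforce
  ultimately have D: "card (S 1 2) = card (S 0 0) + 1" using r0 r1 cm by linarith
  have n2: "2 \<notin> C 0"
  proof
    assume "2 \<in> C 0"
    then obtain k where k: "2 = \<rho> ^ k" "k mod 3 = 0" using memC[of 0] by auto
    then obtain t where t: "k = 3 * t" by auto
    have "(2::'a) ^ m = \<rho> ^ (t * (CARD('a) - 1))"
      unfolding k(1) t m_def using three_N by (auto simp: power_mult[symmetric] mult_ac elim!: dvdE)
    also have "\<dots> = (\<rho> ^ (CARD('a) - 1)) ^ t" by (simp only: mult.commute[of t] power_mult)
    also have "\<dots> = 1" by (simp only: rho_N power_one)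
    finally have h: "(2::'a) ^ m = 1" .
    have "CHAR('a) > 0" by (rule finite_imp_CHAR_pos) simp
    then have pc: "prime CHAR('a)" by (rule prime_CHAR_semidom)
    have "CHAR('a) dvd p ^ a" using CHAR_dvd_CARD[where 'a='a] assms(5) by simp
    then have "CHAR('a) dvd p" using pc prime_dvd_power by blast
    then have cp: "CHAR('a) = p" by (rule primes_dvd_imp_eq[OF pc assms(1)])
    have "of_nat (2 ^ m - 1) = ((2::'a) ^ m - 1)" by (simp add: of_nat_diff)
    also have "\<dots> = 0" using h by simp
    finally have "p dvd 2 ^ m - 1" using of_nat_eq_0_iff_char_dvd[where 'a='a] cp by metis
    then have "[2 ^ m = 1] (mod p)" using cong_altdef_nat[of 1 "2 ^ m" p] by simp
    then have "ord p 2 dvd m" using ord_divides by blast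
    then have "3 * ord p 2 dvd 3 * m" by simp
    also have "3 * m = p ^ a - 1" using three_N assms(5) unfolding m_def by simp
    finally have "[p ^ a = 1] (mod 3 * ord p 2)" using cong_altdef_nat pa1 by simp
    then have "ord (3 * ord p 2) p dvd a" using ord_divides by blast
    then show False using assms(4) by simp
  qed
  have "even (card (S 0 0))" using S00_even n2 by simp
  then show ?thesis using D cyc_num_S by simp
qed

end
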